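(* Let $H\in\mathbb{R}^{n_z\times n_z}$ be symmetric positive definite, $F\in\mathbb{R}^{n_x\times n_z}$, $G\in\mathbb{R}^{n_c\times n_z}$, $S\in\mathbb{R}^{n_c\times n_x}$, $w\in\mathbb{R}^{n_c}$, and assume $\{z: Gz\le Sx+w\}\neq\emptyset$ for every $x\in\mathbb{R}^{n_x}$. Let $\kappa$ be a global Lipschitz constant of this mp-QP, let $\hat{x},x\in\mathbb{R}^{n_x}$, and define $$\mathbb{I}(x)=\mathbb{A}(\hat{x})\cup\big\{j\in\mathbb{A}^c(\hat{x}) : \mathcal{B}(z^*(\hat{x}),\kappa\|x-\hat{x}\|)\not\subseteq\mathcal{Z}_j(x)\big\}.$$ Then $z^*(x,\mathbb{I}(x))=z^*(x)$.
   Context: For a parameter $x$, mp-QP$(x)$ is: minimize $V(z)=\frac12 z^THz+x^TFz$ over $z\in\mathcal{Z}(x)=\{z\in\mathbb{R}^{n_z}: Gz\le Sx+w\}$. $G_j,S_j$ are the $j$-th rows of $G,S$, $w_j$ the $j$-th entry of $w$, and $\mathcal{Z}_j(x)=\{z: G_jz\le S_jx+w_j\}$. For $\mathbb{I}\subseteq\{1,\dots,n_c\}$, $\mathcal{Z}(x,\mathbb{I})=\bigcap_{j\in\mathbb{I}}\mathcal{Z}_j(x)$ ($=\mathbb{R}^{n_z}$ if $\mathbb{I}=\emptyset$) and $z^*(x,\mathbb{I})$ is the unique minimizer of $V$ over $\mathcal{Z}(x,\mathbb{I})$; $z^*(x)=z^*(x,\{1,\dots,n_c\})$. Active set $\mathbb{A}(x)=\{j: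 G_jz^*(x)=S_jx+w_j\}$, inactive set $\mathbb{A}^c(x)=\{j: G_jz^*(x)<S_jx+w_j\}$. A global Lipschitz constant (GLC) is a number $\kappa\in\mathbb{R}$ such that $\|z^*(x_1,\mathbb{I})-z^*(x_2,\mathbb{I})\|\le\kappa\|x_1-x_2\|$ for all $x_1,x_2\in\mathbb{R}^{n_x}$ and all $\mathbb{I}\subseteq\{1,\dots,n_c\}$. $\mathcal{B}(q,r)=\{v:\|v-q\|\le r\}$ (Euclidean norm). When $G_j\neq0$, the condition $\mathcal{B}(z^*(\hat x),\kappa\|x-\hat x\|)\not\subseteq\mathcal{Z}_j(x)$ is equivalent to $\kappa\|x-\hat{x}\|>\frac{w_j+S_jx-G_jz^*(\hat{x})}{\|G_j\|}$ (this is the set computed by the paper's Algorithm 1). *)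

theory Defs
  imports "HOL-Analysis.Analysis"
begin

text \<open>mp-QP data: H :: nz x nz, F :: nx x nz, G :: nc x nz, S :: nc x nx, w :: nc.
  Rows of a matrix M are M $ j. Dimensions are finite index types.\<close>

definition sym_pos_def_mat :: "real^'n^'n \<Rightarrow> bool" where
  "sym_pos_def_mat H \<longleftrightarrow> transpose H = H \<and> (\<forall>z. z \<noteq> 0 \<longrightarrow> z \<bullet> (H *v z) > 0)"

definition qp_cost :: "real^'nz^'nz \<Rightarrow> real^'nz^'nx \<Rightarrow> real^'nx \<Rightarrow> real^'nz \<Rightarrow> real" where
  "qp_cost H F x z = (1/2) * (z \<bullet> (H *v z)) + x \<bullet> (F *v z)"

definition Zj :: "real^'nz^'nc \<Rightarrow> real^'nx^'nc \<Rightarrow> real^'nc \<Rightarrow> 'nc \<Rightarrow> real^'nx \<Rightarrow> (real^'nz) set" where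
  "Zj G S w j x = {z. (G $ j) \<bullet> z \<le> (S $ j) \<bullet> x + w $ j}"

definition ZI :: "real^'nz^'nc \<Rightarrow> real^'nx^'nc \<Rightarrow> real^'nc \<Rightarrow> real^'nx \<Rightarrow> 'nc set \<Rightarrow> (real^'nz) set" where
  "ZI G S w x I = (\<Inter>j\<in>I. Zj G S w j x)"

definition zstarI :: "real^'nz^'nz \<Rightarrow> real^'nz^'nx \<Rightarrow> real^'nz^'nc \<Rightarrow> real^'nx^'nc \<Rightarrow> real^'nc
    \<Rightarrow> real^'nx \<Rightarrow> 'nc set \<Rightarrow> real^'nz" where
  "zstarI H F G S w x I = (THE z. z \<in> ZI G S w x I \<and> (\<forall>y\<in>ZI G S w x I. qp_cost H F x z \<le> qp_cost H F x y))"

definition zstar :: "real^'nz^'nz \<Rightarrow> real^'nz^'nx \<Rightarrow> real^'nz^'nc \<Rightarrow> real^'nx^'nc \<Rightarrow> real^'nc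
    \<Rightarrow> real^'nx \<Rightarrow> real^'nz" where
  "zstar H F G S w x = zstarI H F G S w x UNIV"

definition active_set :: "real^'nz^'nz \<Rightarrow> real^'nz^'nx \<Rightarrow> real^'nz^'nc \<Rightarrow> real^'nx^'nc \<Rightarrow> real^'nc
    \<Rightarrow> real^'nx \<Rightarrow> 'nc set" where
  "active_set H F G S w x = {j. (G $ j) \<bullet> zstar H F G S w x = (S $ j) \<bullet> x + w $ j}"

definition inactive_set :: "real^'nz^'nz \<Rightarrow> real^'nz^'nx \<Rightarrow> real^'nz^'nc \<Rightarrow> real^'nx^'nc \<Rightarrow> real^'nc
    \<Rightarrow> real^'nx \<Rightarrow> 'nc set" where
  "inactive_set H F G S w x = {j. (G $ j) \<bullet> zstar H F G S w x < (S $ j) \<bullet> x + w $ j}"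

definition is_GLC :: "real^'nz^'nz \<Rightarrow> real^'nz^'nx \<Rightarrow> real^'nz^'nc \<Rightarrow> real^'nx^'nc \<Rightarrow> real^'nc
    \<Rightarrow> real \<Rightarrow> bool" where
  "is_GLC H F G S w \<kappa> \<longleftrightarrow>
     (\<forall>x1 x2 I. norm (zstarI H F G S w x1 I - zstarI H F G S w x2 I) \<le> \<kappa> * norm (x1 - x2))"

end

theory Submission
  imports Defs
begin

lemma sym_inner:
  fixes H :: "real^'n^'n"
  assumes "transpose H = H"
  shows "a \<bullet> (H *v d) = d \<bullet> (H *v a)"
proof -
  have "a \<bullet> (H *v d) = (a v* H) \<bullet> d" by (simp add: dot_lmul_matrix)
  also have "\<dots> = (transpose H *v a) \<bullet> d" by (simp add: transpose_matrix_vector)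
  also have "\<dots> = d \<bullet> (H *v a)" using assms by (simp add: inner_commute)
  finally show ?thesis .
qed

lemma cost_expand:
  fixes H :: "real^'n^'n"
  assumes "transpose H = H"
  shows "qp_cost H F x (a + t *\<^sub>R d) = qp_cost H F x a + t * (a \<bullet> (H *v d) + x \<bullet> (F *v d))
           + t^2/2 * (d \<bullet> (H *v d))"
proof -
  have s: "d \<bullet> (H *v a) = a \<bullet> (H *v d)" using sym_inner[OF assms] by simp
  show ?thesis
    unfolding qp_cost_def
    by (simp add: matrix_vector_right_distrib matrix_vector_mult_scaleR inner_add_left inner_add_right
        s algebra_simps power2_eq_square)
qed

lemma quad_lower:
  fixes H :: "real^'n^'n"
  assumes "sym_pos_def_mat H"
  shows "\<exists>m>0. \<forall>z. m * (norm z)^2 \<le> z \<bullet> (H *v z)"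
proof -
  have pos: "\<And>z. z \<noteq> 0 \<Longrightarrow> z \<bullet> (H *v z) > 0" using assms by (simp add: sym_pos_def_mat_def)
  have c: "continuous_on (sphere 0 1) (\<lambda>z::real^'n. z \<bullet> (H *v z))"
    by (intro continuous_intros matrix_vector_mult_linear_continuous_on)
  have ne: "sphere (0::real^'n) 1 \<noteq> {}" by simp
  obtain u where u: "u \<in> sphere 0 1" and um: "\<forall>y\<in>sphere 0 1. u \<bullet> (H *v u) \<le> y \<bullet> (H *v y)"
    using continuous_attains_inf[OF compact_sphere ne c] by blast
  have "u \<noteq> 0" using u by auto
  hence mpos: "u \<bullet> (H *v u) > 0" by (rule pos)
  show ?thesis
  proof (intro exI[of _ "u \<bullet> (H *v u)"] conjI allI mpos)
    fix z :: "real^'n"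
    show "u \<bullet> (H *v u) * (norm z)^2 \<le> z \<bullet> (H *v z)"
    proof (cases "z = 0")
      case True then show ?thesis by simp
    next
      case False
      define v where "v = (1/norm z) *\<^sub>R z"
      have "v \<in> sphere 0 1" using False by (simp add: v_def)
      hence le: "u \<bullet> (H *v u) \<le> v \<bullet> (H *v v)" using um by blast
      have zv: "z = norm z *\<^sub>R v" using False by (simp add: v_def)
      have "z \<bullet> (H *v z) = (norm z)^2 * (v \<bullet> (H *v v))"
        by (subst (1 2) zv) (simp add: matrix_vector_mult_scaleR power2_eq_square)
      moreover have "u \<bullet> (H *v u) * (norm z)^2 \<le> v \<bullet> (H *v v) * (norm z)^2"
        by (rule mult_right_mono[OF le]) simp
      ultimately show ?thesis by (simp add: mult.commute)
    qed
  qed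
qed

lemma exists_min:
  fixes H :: "real^'n^'n" and K :: "(real^'n) set"
  assumes "sym_pos_def_mat H" "closed K" "K \<noteq> {}"
  shows "\<exists>z\<in>K. \<forall>y\<in>K. qp_cost H F x z \<le> qp_cost H F x y"
proof -
  obtain m where m: "m > 0" "\<And>z. m * (norm z)^2 \<le> z \<bullet> (H *v z)"
    using quad_lower[OF assms(1)] by blast
  obtain C where C: "C > 0" "\<And>z. norm (F *v z) \<le> norm z * C"
    using bounded_linear.pos_bounded[OF matrix_vector_mul_bounded_linear[of F]] by blast
  define c where "c = norm x * C"
  have c0: "c \<ge> 0" using C by (simp add: c_def)
  have low: "qp_cost H F x z \<ge> m/2 * (norm z)^2 - c * norm z" for z
  proof -
    have "x \<bullet> (F *v z) \<ge> - (norm x * norm (F *v z))"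
      using Cauchy_Schwarz_ineq2[of x "F *v z"] by (smt (verit) abs_le_iff)
    moreover have "norm x * norm (F *v z) \<le> norm x * (norm z * C)"
      using C(2)[of z] by (simp add: mult_left_mono)
    ultimately have "x \<bullet> (F *v z) \<ge> - (c * norm z)" by (simp add: c_def algebra_simps)
    then show ?thesis using m(2)[of z] unfolding qp_cost_def by simp
  qed
  obtain z0 where z0: "z0 \<in> K" using assms(3) by blast
  define v0 where "v0 = qp_cost H F x z0"
  define R where "R = max 1 (max (norm z0) (2 * (\<bar>v0\<bar> + c) / m))"
  define K' where "K' = cball 0 R \<inter> K"
  have cK: "compact K'" unfolding K'_def using assms(2) by (intro compact_Int_closed) auto
  have z0K: "z0 \<in> K'" using z0 by (simp add: K'_def R_def)
  have cont: "continuous_on K' (qp_cost H F x)"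
    unfolding qp_cost_def by (intro continuous_intros matrix_vector_mult_linear_continuous_on)
  obtain z where zK: "z \<in> K'" and zm: "\<forall>y\<in>K'. qp_cost H F x z \<le> qp_cost H F x y"
    using continuous_attains_inf[OF cK _ cont] z0K by blast
  show ?thesis
  proof (intro bexI ballI)
    show "z \<in> K" using zK by (simp add: K'_def)
    fix y assume yK: "y \<in> K"
    show "qp_cost H F x z \<le> qp_cost H F x y"
    proof (cases "norm y \<le> R")
      case True then show ?thesis using zm yK by (simp add: K'_def)
    next
      case False
      define r where "r = norm y"
      have r1: "r \<ge> 1" and rR: "r > 2 * (\<bar>v0\<bar> + c) / m" using False by (auto simp: r_def R_def)
      have "m * r > 2 * (\<bar>v0\<bar> + c)" using rR m(1) by (simp add: field_simps)
      hence a: "m/2 * r - c > \<bar>v0\<bar>" by simp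
      have "r * (m/2 * r - c) \<ge> 1 * (m/2 * r - c)"
        using r1 a by (intro mult_right_mono) auto
      hence "m/2 * r^2 - c * r > \<bar>v0\<bar>" using a by (simp add: power2_eq_square algebra_simps)
      hence "qp_cost H F x y > v0" using low[of y] by (simp add: r_def)
      moreover have "qp_cost H F x z \<le> v0" using zm z0K by (simp add: v0_def)
      ultimately show ?thesis by simp
    qed
  qed
qed

lemma unique_min:
  fixes H :: "real^'n^'n" and K :: "(real^'n) set"
  assumes "sym_pos_def_mat H" "convex K" "z1 \<in> K" "z2 \<in> K"
    "\<forall>y\<in>K. qp_cost H F x z1 \<le> qp_cost H F x y" "\<forall>y\<in>K. qp_cost H F x z2 \<le> qp_cost H F x y"
  shows "z1 = z2"
proof (rule ccontr)
  assume ne: "z1 \<noteq> z2"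
  have T: "transpose H = H" using assms(1) by (simp add: sym_pos_def_mat_def)
  define d where "d = z2 - z1"
  have "d \<noteq> 0" using ne by (simp add: d_def)
  hence q: "d \<bullet> (H *v d) > 0" using assms(1) by (simp add: sym_pos_def_mat_def)
  define g where "g = z1 \<bullet> (H *v d) + x \<bullet> (F *v d)"
  have "(1/2::real) *\<^sub>R z1 + (1/2::real) *\<^sub>R z2 \<in> K"
    using convexD[OF assms(2) assms(3) assms(4), of "1/2" "1/2"] by simp
  moreover have "(1/2::real) *\<^sub>R z1 + (1/2::real) *\<^sub>R z2 = z1 + (1/2) *\<^sub>R d"
  proof -
    have "z1 = (1/2::real) *\<^sub>R z1 + (1/2::real) *\<^sub>R z1" by (simp flip: scaleR_add_left)
    then show ?thesis by (simp add: d_def scaleR_diff_right)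
  qed
  ultimately have mK: "z1 + (1/2) *\<^sub>R d \<in> K" by simp
  have e1: "qp_cost H F x (z1 + (1/2) *\<^sub>R d) = qp_cost H F x z1 + g/2 + (d \<bullet> (H *v d))/8"
    using cost_expand[OF T, of F x z1 "1/2" d] by (simp add: g_def power2_eq_square)
  have "z2 = z1 + (1::real) *\<^sub>R d" by (simp add: d_def)
  hence e2: "qp_cost H F x z2 = qp_cost H F x z1 + g + (d \<bullet> (H *v d))/2"
    using cost_expand[OF T, of F x z1 1 d] by (simp add: g_def)
  have "qp_cost H F x z1 \<le> qp_cost H F x z2" using assms(5,4) by blast
  moreover have "qp_cost H F x z2 \<le> qp_cost H F x z1" using assms(6,3) by blast
  moreover have "qp_cost H F x z1 \<le> qp_cost H F x (z1 + (1/2) *\<^sub>R d)" using assms(5) mK by blast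
  ultimately show False using e1 e2 q by linarith
qed

lemma ZI_closed: "closed (ZI G S w x I)"
  unfolding ZI_def Zj_def by (intro closed_INT ballI closed_halfspace_le)

lemma ZI_convex: "convex (ZI G S w x I)"
  unfolding ZI_def Zj_def by (intro convex_INT ballI convex_halfspace_le)

lemma zstarI_spec:
  assumes "sym_pos_def_mat H" "ZI G S w x I \<noteq> {}"
  shows "zstarI H F G S w x I \<in> ZI G S w x I \<and>
         (\<forall>y\<in>ZI G S w x I. qp_cost H F x (zstarI H F G S w x I) \<le> qp_cost H F x y)"
    and "\<And>z. z \<in> ZI G S w x I \<Longrightarrow> \<forall>y\<in>ZI G S w x I. qp_cost H F x z \<le> qp_cost H F x y
          \<Longrightarrow> zstarI H F G S w x I = z"
proof -
  have ex1: "\<exists>!z. z \<in> ZI G S w x I \<and> (\<forall>y\<in>ZI G S w x I. qp_cost H F x z \<le> qp_cost H F x y)"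
    using exists_min[OF assms(1) ZI_closed assms(2)] unique_min[OF assms(1) ZI_convex] by metis
  show "zstarI H F G S w x I \<in> ZI G S w x I \<and>
         (\<forall>y\<in>ZI G S w x I. qp_cost H F x (zstarI H F G S w x I) \<le> qp_cost H F x y)"
    unfolding zstarI_def by (rule theI'[OF ex1])
  fix z assume "z \<in> ZI G S w x I" "\<forall>y\<in>ZI G S w x I. qp_cost H F x z \<le> qp_cost H F x y"
  then show "zstarI H F G S w x I = z"
    unfolding zstarI_def using ex1 by (intro the1_equality) auto
qed

lemma ZI_UNIV_sub: "ZI G S w x UNIV \<subseteq> ZI G S w x I"
  unfolding ZI_def by auto

lemma active_superset:
  assumes H: "sym_pos_def_mat H" and ne: "ZI G S w xh UNIV \<noteq> {}"
    and sub: "active_set H F G S w xh \<subseteq> I"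
  shows "zstarI H F G S w xh I = zstar H F G S w xh"
proof -
  have T: "transpose H = H" using H by (simp add: sym_pos_def_mat_def)
  define zh where "zh = zstar H F G S w xh"
  have sp: "zh \<in> ZI G S w xh UNIV" "\<forall>y\<in>ZI G S w xh UNIV. qp_cost H F xh zh \<le> qp_cost H F xh y"
    using zstarI_spec(1)[OF H ne] by (auto simp: zh_def zstar_def)
  have neI: "ZI G S w xh I \<noteq> {}" using ne ZI_UNIV_sub by blast
  have zhI: "zh \<in> ZI G S w xh I" using sp(1) ZI_UNIV_sub by blast
  have feas: "\<And>j. (G $ j) \<bullet> zh \<le> (S $ j) \<bullet> xh + w $ j"
    using sp(1) by (auto simp: ZI_def Zj_def)
  have minI: "\<forall>y\<in>ZI G S w xh I. qp_cost H F xh zh \<le> qp_cost H F xh y"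
  proof (rule ccontr)
    assume "\<not> ?thesis"
    then obtain y where yI: "y \<in> ZI G S w xh I" and lt: "qp_cost H F xh y < qp_cost H F xh zh"
      by force
    define d where "d = y - zh"
    define g where "g = zh \<bullet> (H *v d) + xh \<bullet> (F *v d)"
    define q where "q = d \<bullet> (H *v d)"
    have q0: "q \<ge> 0"
    proof (cases "d = 0")
      case True then show ?thesis by (simp add: q_def)
    next
      case False then show ?thesis using H by (auto simp: q_def sym_pos_def_mat_def intro: less_imp_le)
    qed
    have "y = zh + (1::real) *\<^sub>R d" by (simp add: d_def)
    hence "qp_cost H F xh y = qp_cost H F xh zh + g + q/2"
      using cost_expand[OF T, of F xh zh 1 d] by (simp add: g_def q_def)
    hence gq: "g + q/2 < 0" using lt by simp
    have ev: "\<forall>\<^sub>F t in at_right (0::real). \<forall>j. j \<notin> I \<longrightarrow> t * ((G $ j) \<bullet> d) < (S $ j) \<bullet> xh + w $ j - (G $ j) \<bullet> zh"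
    proof (rule eventually_all_finite)
      fix j
      show "\<forall>\<^sub>F t in at_right (0::real). j \<notin> I \<longrightarrow> t * ((G $ j) \<bullet> d) < (S $ j) \<bullet> xh + w $ j - (G $ j) \<bullet> zh"
      proof (cases "j \<in> I")
        case True then show ?thesis by simp
      next
        case False
        hence "j \<notin> active_set H F G S w xh" using sub by blast
        hence "(G $ j) \<bullet> zh \<noteq> (S $ j) \<bullet> xh + w $ j" by (simp add: active_set_def zh_def)
        hence pos: "(S $ j) \<bullet> xh + w $ j - (G $ j) \<bullet> zh > 0" using feas[of j] by simp
        have "((\<lambda>t::real. t * ((G $ j) \<bullet> d)) \<longlongrightarrow> 0 * ((G $ j) \<bullet> d)) (at_right 0)"
          by (intro tendsto_intros)
        hence "((\<lambda>t::real. t * ((G $ j) \<bullet> d)) \<longlongrightarrow> 0) (at_right 0)" by simp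
        from order_tendstoD(2)[OF this pos] show ?thesis by (rule eventually_mono) simp
      qed
    qed
    have ev2: "\<forall>\<^sub>F t in at_right (0::real). t \<in> {0<..<1}"
      by (rule eventually_at_right_real) simp
    obtain t where t: "t \<in> {0<..<1}" and tj: "\<forall>j. j \<notin> I \<longrightarrow> t * ((G $ j) \<bullet> d) < (S $ j) \<bullet> xh + w $ j - (G $ j) \<bullet> zh"
      using eventually_happens'[OF trivial_limit_at_right_real eventually_conj[OF ev ev2]] by blast
    define zt where "zt = zh + t *\<^sub>R d"
    have ztK: "zt \<in> ZI G S w xh UNIV"
    proof -
      have "(G $ j) \<bullet> zt \<le> (S $ j) \<bullet> xh + w $ j" for j
      proof (cases "j \<in> I")
        case True
        hence yj: "(G $ j) \<bullet> y \<le> (S $ j) \<bullet> xh + w $ j" using yI by (auto simp: ZI_def Zj_def)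
        have "(G $ j) \<bullet> zt = (1 - t) * ((G $ j) \<bullet> zh) + t * ((G $ j) \<bullet> y)"
          by (simp add: zt_def d_def inner_add_right inner_diff_right algebra_simps)
        also have "\<dots> \<le> (1 - t) * ((S $ j) \<bullet> xh + w $ j) + t * ((S $ j) \<bullet> xh + w $ j)"
          using t feas[of j] yj by (intro add_mono mult_left_mono) auto
        finally show ?thesis by (simp add: algebra_simps)
      next
        case False
        have "t * ((G $ j) \<bullet> d) < (S $ j) \<bullet> xh + w $ j - (G $ j) \<bullet> zh" using tj False by blast
        then show ?thesis by (simp add: zt_def inner_add_right)
      qed
      then show ?thesis by (simp add: ZI_def Zj_def)
    qed
    have "qp_cost H F xh zt = qp_cost H F xh zh + t * g + t^2/2 * q"
      using cost_expand[OF T, of F xh zh t d] by (simp add: zt_def g_def q_def)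
    also have "\<dots> \<le> qp_cost H F xh zh + t * g + t/2 * q"
    proof -
      have "t^2 \<le> t" using t by (simp add: power2_eq_square mult_left_le)
      then show ?thesis using q0 by (simp add: mult_right_mono divide_right_mono)
    qed
    also have "\<dots> < qp_cost H F xh zh"
    proof -
      have "t * (g + q/2) < 0" using t gq by (simp add: mult_pos_neg)
      then show ?thesis by (simp add: algebra_simps)
    qed
    finally show False using sp(2) ztK by fastforce
  qed
  show ?thesis unfolding zh_def[symmetric]
    by (rule zstarI_spec(2)[OF H neI zhI minI])
qed

theorem theorem1:
  fixes H :: "real^'nz^'nz" and F :: "real^'nz^'nx" and G :: "real^'nz^'nc::finite"
    and S :: "real^'nx^'nc" and w :: "real^'nc" and \<kappa> :: real and xh x :: "real^'nx"
  assumes "sym_pos_def_mat H"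
    and "\<forall>x. {z. \<forall>j. (G $ j) \<bullet> z \<le> (S $ j) \<bullet> x + w $ j} \<noteq> {}"
    and "is_GLC H F G S w \<kappa>"
  shows "zstarI H F G S w x
           (active_set H F G S w xh \<union>
            {j \<in> inactive_set H F G S w xh.
               \<not> (cball (zstar H F G S w xh) (\<kappa> * norm (x - xh)) \<subseteq> Zj G S w j x)})
         = zstar H F G S w x"
proof -
  define I where "I = active_set H F G S w xh \<union>
            {j \<in> inactive_set H F G S w xh.
               \<not> (cball (zstar H F G S w xh) (\<kappa> * norm (x - xh)) \<subseteq> Zj G S w j x)}"
  have neU: "ZI G S w y UNIV \<noteq> {}" for y
  proof -
    have "ZI G S w y UNIV = {z. \<forall>j. (G $ j) \<bullet> z \<le> (S $ j) \<bullet> y + w $ j}"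
      by (auto simp: ZI_def Zj_def)
    then show ?thesis using assms(2) by simp
  qed
  have neI: "ZI G S w x I \<noteq> {}" using neU[of x] ZI_UNIV_sub by blast
  define zh where "zh = zstar H F G S w xh"
  define z1 where "z1 = zstarI H F G S w x I"
  have eqh: "zstarI H F G S w xh I = zh"
    unfolding zh_def by (rule active_superset[OF assms(1) neU]) (simp add: I_def)
  have "norm (z1 - zstarI H F G S w xh I) \<le> \<kappa> * norm (x - xh)"
    using assms(3) unfolding is_GLC_def z1_def by blast
  hence inball: "z1 \<in> cball zh (\<kappa> * norm (x - xh))"
    using eqh by (simp add: dist_norm norm_minus_commute)
  have sp1: "z1 \<in> ZI G S w x I" "\<forall>y\<in>ZI G S w x I. qp_cost H F x z1 \<le> qp_cost H F x y"
    using zstarI_spec(1)[OF assms(1) neI] by (auto simp: z1_def)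
  have feas: "\<And>j. (G $ j) \<bullet> zh \<le> (S $ j) \<bullet> xh + w $ j"
    using zstarI_spec(1)[OF assms(1) neU[of xh]] by (auto simp: ZI_def Zj_def zh_def zstar_def)
  have z1U: "z1 \<in> ZI G S w x UNIV"
  proof -
    have "z1 \<in> Zj G S w j x" for j
    proof (cases "j \<in> I")
      case True then show ?thesis using sp1(1) by (auto simp: ZI_def)
    next
      case False
      have "j \<in> inactive_set H F G S w xh"
        using False feas[of j] by (auto simp: I_def active_set_def inactive_set_def zh_def)
      hence "cball zh (\<kappa> * norm (x - xh)) \<subseteq> Zj G S w j x" using False by (auto simp: I_def zh_def)
      then show ?thesis using inball by blast
    qed
    then show ?thesis by (simp add: ZI_def)
  qed
  have "zstarI H F G S w x UNIV = z1"
    using zstarI_spec(2)[OF assms(1) neU z1U] sp1(2) ZI_UNIV_sub by blast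
  then show ?thesis by (simp add: zstar_def z1_def I_def)
qed

end
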